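(* For every integer $\ell\ge 0$ and every $\mathbf z=(z_1,\dots,z_{K-1})\in[0,1]^{K-1}$, $$G_\ell(z_1,\dots,z_{K-1})=(1-r)\,\zeta_-(z_1,\dots,z_{K-1})^{\ell}\prod_{\kappa=1}^{K-1}\frac{1-z_\kappa\,\zeta_-(z_1,\dots,z_\kappa)}{1-z_\kappa\,\zeta_-(z_1,\dots,z_{\kappa-1})},$$ and all denominators in this product are strictly positive on $[0,1]^{K-1}$. In particular $P(\mathbf 0)=G_0(0,\dots,0)=1-r$ and $G_\ell=G_0\cdot\zeta_-(z_1,\dots,z_{K-1})^\ell$.
   Context: Fix integers $c\ge 1$, $K\ge 2$ and reals $r_1,\dots,r_K>0$ with $r=\sum_{k=1}^K r_k<1$ (here $r_k=\lambda_k/(c\mu)$ for an M/M/$c$ queue with $K$ non-preemptive priority levels, level 1 the highest, Poisson arrival rates $\lambda_k$ and common exponential service rate $\mu$). Write $\sigma_k=\sum_{j=1}^k r_j$ ($\sigma_0=0$, $\sigma_K=r$), $\mathbf e_\kappa$ for the standard unit vectors of $\mathbb Z^K$, $\delta_{ij}$ for the Kronecker delta. Consider the equations for $(p_{\mathbf n})_{\mathbf n\in\mathbb N_0^K}$, with the convention $p_{\mathbf n}=0$ if some component of $\mathbf n$ is negative: $$(1+r)p_{\mathbf n}=\Big(\prod_{j=1}^K\delta_{0n_j}\Big)p_{\mathbf n}+\sum_{\kappa=1}^K\Big[r_\kappa p_{\mathbf n-\mathbf e_\kappa}+\Big(\prod_{j=1}^{\kappa-1}\delta_{0n_j}\Big)p_{\mathbf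 n+\mathbf e_\kappa}\Big],\quad \mathbf n\in\mathbb N_0^K .$$ These are the stationary balance equations for the states in which all $c$ servers are busy and $n_\kappa$ clients of level $\kappa$ wait in the queue; their nonnegative summable solutions form a one-dimensional cone, and $P$ denotes the unique solution with $\sum_{\mathbf n}P(\mathbf n)=1$ (the joint queue-length distribution conditional on all servers busy). For $\kappa=0,1,\dots,K-1$ and $z_1,\dots,z_\kappa\in[0,1]$ define $\beta(z_1,\dots,z_\kappa)=\sum_{k=1}^\kappa z_k r_{K+1-k}$ (so $\beta()=0$) and $$\zeta_\pm(z_1,\dots,z_\kappa)=\tfrac12\Big[1+r-\beta\pm\sqrt{(1+r-\beta)^2-4\sigma_{K-\kappa}}\Big],\quad \beta=\beta(z_1,\dots,z_\kappa),$$ the two real roots of $\zeta^2-(1+r-\beta)\zeta+\sigma_{K-\kappa}=0$ (the discriminant is positive there); in particular $\zeta_+()=1$, $\zeta_-()=r$. For $\ell\ge0$ define the generating function $$G_\ell(z_1,\dots,z_{K-1})=\sum_{n_2,\dots,n_K\ge0}P(\ell,n_2,\dots,n_K)\prod_{j=2}^K z_{K+1-j}^{\,n_j},$$ so $z_1$ is paired with the lowest level $K$ and $z_{K-1}$ with level $2$. *)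

theory Defs
  imports "HOL-Analysis.Analysis"
begin

text \<open>States: vectors n in N_0^K, represented as functions nat => nat supported on {1..K}
  (component n k is the number of waiting level-k clients).\<close>
definition states :: "nat \<Rightarrow> (nat \<Rightarrow> nat) set" where
  "states K = {n. \<forall>k. k \<notin> {1..K} \<longrightarrow> n k = 0}"

definition sigma :: "(nat \<Rightarrow> real) \<Rightarrow> nat \<Rightarrow> real" where
  "sigma r k = (\<Sum>j=1..k. r j)"

text \<open>Balance equation at state n; p at a vector with a negative component is 0.\<close>
definition balance_eq :: "nat \<Rightarrow> (nat \<Rightarrow> real) \<Rightarrow> ((nat \<Rightarrow> nat) \<Rightarrow> real) \<Rightarrow> (nat \<Rightarrow> nat) \<Rightarrow> bool" where
  "balance_eq K r p n \<longleftrightarrow>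
     (1 + sigma r K) * p n =
       (if (\<forall>j\<in>{1..K}. n j = 0) then p n else 0)
     + (\<Sum>\<kappa>=1..K.
          r \<kappa> * (if n \<kappa> > 0 then p (n(\<kappa> := n \<kappa> - 1)) else 0)
        + (if (\<forall>j\<in>{1..<\<kappa>}. n j = 0) then p (n(\<kappa> := n \<kappa> + 1)) else 0))"

definition is_normalized_solution :: "nat \<Rightarrow> (nat \<Rightarrow> real) \<Rightarrow> ((nat \<Rightarrow> nat) \<Rightarrow> real) \<Rightarrow> bool" where
  "is_normalized_solution K r p \<longleftrightarrow>
     (\<forall>n\<in>states K. p n \<ge> 0) \<and> p summable_on states K \<and> infsum p (states K) = 1 \<and>
     (\<forall>n\<in>states K. balance_eq K r p n)"

definition beta :: "nat \<Rightarrow> (nat \<Rightarrow> real) \<Rightarrow> nat \<Rightarrow> (nat \<Rightarrow> real) \<Rightarrow> real" where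
  "beta K r \<kappa> z = (\<Sum>k=1..\<kappa>. z k * r (K + 1 - k))"

definition zeta_minus :: "nat \<Rightarrow> (nat \<Rightarrow> real) \<Rightarrow> nat \<Rightarrow> (nat \<Rightarrow> real) \<Rightarrow> real" where
  "zeta_minus K r \<kappa> z =
     (let b = beta K r \<kappa> z in
      ((1 + sigma r K - b) - sqrt ((1 + sigma r K - b)^2 - 4 * sigma r (K - \<kappa>))) / 2)"

definition zeta_plus :: "nat \<Rightarrow> (nat \<Rightarrow> real) \<Rightarrow> nat \<Rightarrow> (nat \<Rightarrow> real) \<Rightarrow> real" where
  "zeta_plus K r \<kappa> z =
     (let b = beta K r \<kappa> z in
      ((1 + sigma r K - b) + sqrt ((1 + sigma r K - b)^2 - 4 * sigma r (K - \<kappa>))) / 2)"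

definition genfun :: "nat \<Rightarrow> ((nat \<Rightarrow> nat) \<Rightarrow> real) \<Rightarrow> nat \<Rightarrow> (nat \<Rightarrow> real) \<Rightarrow> real" where
  "genfun K p l z = (\<Sum>\<^sub>\<infinity> n \<in> {n \<in> states K. n 1 = l}. p n * (\<Prod>j=2..K. z (K + 1 - j) ^ n j))"

end

theory Submission
  imports Defs
begin

lemma has_sum_sum_fin:
  fixes f :: "'i \<Rightarrow> 'a \<Rightarrow> real"
  assumes "finite I" "\<And>i. i \<in> I \<Longrightarrow> (f i has_sum s i) A"
  shows "((\<lambda>x. \<Sum>i\<in>I. f i x) has_sum (\<Sum>i\<in>I. s i)) A"
  using assms
proof (induction I rule: finite_induct)
  case empty then show ?case by simp
next
  case (insert a I)
  then show ?case by (simp add: has_sum_add)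
qed

lemma infsum_fiber:
  fixes f :: "'a \<Rightarrow> real" and h :: "'a \<Rightarrow> 'b"
  assumes fs: "f summable_on A" and hB: "h ` A \<subseteq> B"
  shows "(\<lambda>b. infsum f {a\<in>A. h a = b}) summable_on B"
    and "infsum f A = infsum (\<lambda>b. infsum f {a\<in>A. h a = b}) B"
proof -
  let ?S = "Sigma B (\<lambda>b. {a\<in>A. h a = b})"
  have bij: "bij_betw (\<lambda>a. (h a, a)) A ?S"
    using hB by (auto simp: bij_betw_def inj_on_def image_iff)
  have "(\<lambda>a. (\<lambda>(b::'b, a). f a) (h a, a)) summable_on A" using fs by simp
  then have s: "(\<lambda>(b::'b, a). f a) summable_on ?S"
    using summable_on_reindex_bij_betw[OF bij] by blast
  show "(\<lambda>b. infsum f {a\<in>A. h a = b}) summable_on B"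
    using summable_on_Sigma_banach[OF s] by simp
  have "infsum (\<lambda>b. infsum f {a\<in>A. h a = b}) B = infsum (\<lambda>(b::'b, a). f a) ?S"
    using infsum_Sigma'_banach[OF s] by simp
  also have "\<dots> = infsum (\<lambda>a. (\<lambda>(b::'b, a). f a) (h a, a)) A"
    by (rule infsum_reindex_bij_betw[OF bij, symmetric])
  also have "\<dots> = infsum f A" by simp
  finally show "infsum f A = infsum (\<lambda>b. infsum f {a\<in>A. h a = b}) B" by simp
qed

lemma rec_solve:
  fixes g :: "nat \<Rightarrow> real"
  assumes rec: "\<And>l. l \<ge> 1 \<Longrightarrow> g (l+1) = (\<zeta> + \<zeta>') * g l - (\<zeta> * \<zeta>') * g (l-1)"
    and z1: "\<zeta>' \<ge> 1" and z0: "0 \<le> \<zeta>" "\<zeta> \<le> 1"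
    and gnn: "\<And>l. g l \<ge> 0" and bnd: "\<And>N. (\<Sum>l<N. g l) \<le> 1"
  shows "g l = g 0 * \<zeta> ^ l"
proof -
  define d where "d l = g (l+1) - \<zeta> * g l" for l
  have dS: "d (Suc l) = \<zeta>' * d l" for l
    using rec[of "Suc l"] by (simp add: d_def algebra_simps)
  have dP: "d l = \<zeta>' ^ l * d 0" for l
    by (induction l) (simp_all add: dS)
  have dge: "\<bar>d l\<bar> \<ge> \<bar>d 0\<bar>" for l
  proof -
    have "1 \<le> \<zeta>' ^ l" using z1 by (simp add: one_le_power)
    then have "\<bar>d 0\<bar> \<le> \<zeta>' ^ l * \<bar>d 0\<bar>" by (simp add: mult_le_cancel_right1)
    then show ?thesis using z1 dP[of l] by (simp add: abs_mult)
  qed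
  have dle: "\<bar>d l\<bar> \<le> g (l+1) + g l" for l
  proof -
    have "\<zeta> * g l \<le> g l" using z0 gnn[of l] by (simp add: mult_left_le_one_le)
    moreover have "0 \<le> \<zeta> * g l" using z0 gnn[of l] by simp
    ultimately show ?thesis using gnn[of "l+1"] by (simp add: d_def abs_le_iff)
  qed
  have "real N * \<bar>d 0\<bar> \<le> 2" for N
  proof -
    have "real N * \<bar>d 0\<bar> = (\<Sum>l<N. \<bar>d 0\<bar>)" by simp
    also have "\<dots> \<le> (\<Sum>l<N. g (l+1) + g l)"
      by (rule sum_mono) (meson dge dle order_trans)
    also have "\<dots> = (\<Sum>l<N. g (Suc l)) + (\<Sum>l<N. g l)" by (simp add: sum.distrib)
    also have "(\<Sum>l<N. g (Suc l)) \<le> (\<Sum>l<Suc N. g l)"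
      using gnn[of 0] sum.lessThan_Suc_shift[of g N] by linarith
    finally show ?thesis using bnd[of N] bnd[of "Suc N"] by linarith
  qed
  then have "d 0 = 0"
  proof -
    assume H: "\<And>N. real N * \<bar>d 0\<bar> \<le> 2"
    show "d 0 = 0"
    proof (rule ccontr)
      assume "d 0 \<noteq> 0"
      then have pos: "\<bar>d 0\<bar> > 0" by simp
      obtain N :: nat where "real N > 2 / \<bar>d 0\<bar>" using reals_Archimedean2 by blast
      then have "real N * \<bar>d 0\<bar> > 2" using pos by (simp add: field_simps)
      with H[of N] show False by linarith
    qed
  qed
  then have "g (Suc l) = \<zeta> * g l" for l using dP[of l] by (simp add: d_def del: dP)
  note gS = this
  show ?thesis
  proof (induction l)
    case 0 show ?case by simp
  next
    case (Suc l)
    have "g (Suc l) = \<zeta> * g l" by (rule gS)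
    also have "\<dots> = \<zeta> * (g 0 * \<zeta> ^ l)" using Suc.IH by simp
    also have "\<dots> = g 0 * \<zeta> ^ Suc l" by (simp add: mult_ac)
    finally show ?case .
  qed
qed



lemma root_props:
  fixes a c :: real
  assumes s0: "0 < c" and s1: "c < 1" and ac: "a \<ge> 1 + c"
  shows "0 < a^2 - 4*c" "0 < (a - sqrt(a^2 - 4*c))/2" "(a - sqrt(a^2 - 4*c))/2 < 1"
    "a - (a - sqrt(a^2 - 4*c))/2 \<ge> 1"
    "(a - sqrt(a^2 - 4*c))/2 * (a - (a - sqrt(a^2 - 4*c))/2) = c"
proof -
  define D where "D = a^2 - 4*c"
  have A0: "a > 0" using ac s0 by linarith
  have "D \<ge> (1+c)^2 - 4*c"
  proof -
    have "(1+c)^2 \<le> a^2" using ac s0 by (intro power_mono) auto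
    then show ?thesis unfolding D_def by linarith
  qed
  moreover have "(1+c)^2 - 4*c = (1-c)^2" by (simp add: power2_eq_square algebra_simps)
  moreover have "(1-c)^2 > 0" using s1 by simp
  ultimately have Dpos: "D > 0" by linarith
  then show "0 < a^2 - 4*c" by (simp add: D_def)
  have D0: "0 \<le> D" using Dpos by linarith
  have sq: "sqrt D ^ 2 = D" by (rule real_sqrt_pow2[OF D0])
  have sD: "sqrt D \<ge> 0" using D0 by simp
  have "sqrt D < a"
  proof -
    have "D < a^2" using s0 by (simp add: D_def)
    then have "sqrt D < sqrt (a^2)" by (rule real_sqrt_less_mono)
    then show ?thesis using A0 by simp
  qed
  then show "0 < (a - sqrt(a^2 - 4*c))/2" by (simp add: D_def)
  have "a - 2 < sqrt D"
  proof (cases "a \<le> 2")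
    case True then show ?thesis using Dpos by (smt (verit) real_sqrt_gt_zero)
  next
    case False
    have "(a-2)^2 < D" using False s1 by (simp add: D_def power2_eq_square algebra_simps)
    then have "sqrt ((a-2)^2) < sqrt D" by (rule real_sqrt_less_mono)
    then show ?thesis using False by simp
  qed
  then show "(a - sqrt(a^2 - 4*c))/2 < 1" by (simp add: D_def)
  have "2 - a \<le> sqrt D"
  proof (cases "a \<ge> 2")
    case True then show ?thesis using sD by linarith
  next
    case False
    have "(2-a)^2 \<le> D" using ac by (simp add: D_def power2_eq_square algebra_simps)
    then have "sqrt ((2-a)^2) \<le> sqrt D" by (rule real_sqrt_le_mono)
    then show ?thesis using False by simp
  qed
  then show "a - (a - sqrt(a^2 - 4*c))/2 \<ge> 1" unfolding D_def by argo
  have gen: "(a - S)/2 * (a - (a - S)/2) = (a^2 - S ^ 2)/4" for S :: real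
    by (simp add: power2_eq_square field_simps)
  have "(a - sqrt D)/2 * (a - (a - sqrt D)/2) = (a^2 - sqrt D ^ 2)/4"
    by (rule gen)
  also have "\<dots> = c" using sq by (simp add: D_def)
  finally show "(a - sqrt(a^2 - 4*c))/2 * (a - (a - sqrt(a^2 - 4*c))/2) = c" by (simp add: D_def)
qed

lemma beta_sigma:
  "\<kappa> \<le> K \<Longrightarrow> (\<Sum>k=1..\<kappa>. r (K + 1 - k)) + sigma r (K - \<kappa>) = sigma r K"
proof (induction \<kappa>)
  case 0 then show ?case by simp
next
  case (Suc \<kappa>)
  have sS: "sigma r (Suc m) = sigma r m + r (Suc m)" for m
    unfolding sigma_def using sum.nat_ivl_Suc'[of 1 m r] by simp
  have e: "K - \<kappa> = Suc (K - Suc \<kappa>)" using Suc.prems by simp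
  have "sigma r (K - \<kappa>) = sigma r (K - Suc \<kappa>) + r (K - \<kappa>)"
    using sS[of "K - Suc \<kappa>"] e by simp
  moreover have "K + 1 - Suc \<kappa> = K - \<kappa>" by simp
  ultimately show ?case using Suc by simp
qed

lemma sigma_nonneg_mono:
  assumes "\<forall>k\<in>{1..K}. r k > 0" "m \<le> K"
  shows "sigma r m \<le> sigma r K"
proof -
  have "\<And>b. b \<in> {1..K} - {1..m} \<Longrightarrow> 0 \<le> r b" using assms(1) by (auto intro: less_imp_le)
  then show ?thesis unfolding sigma_def using assms(2) by (intro sum_mono2) auto
qed

lemma sigma_pos:
  assumes "\<forall>k\<in>{1..K}. r k > 0" "1 \<le> m" "m \<le> K"
  shows "sigma r m > 0"
  unfolding sigma_def using assms
  by (intro sum_pos) auto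

lemma beta_bounds:
  assumes rpos: "\<forall>k\<in>{1..K}. r k > 0" and kK: "\<kappa> \<le> K"
    and z: "\<forall>k\<in>{1..\<kappa>}. 0 \<le> z k \<and> z k \<le> 1"
  shows "0 \<le> beta K r \<kappa> z" "beta K r \<kappa> z \<le> sigma r K - sigma r (K - \<kappa>)"
proof -
  have rr: "r (K + 1 - k) > 0" if "k \<in> {1..\<kappa>}" for k
  proof -
    have "K + 1 - k \<in> {1..K}" using that kK by auto
    then show ?thesis using rpos by blast
  qed
  show "0 \<le> beta K r \<kappa> z" unfolding beta_def
    using z rr by (intro sum_nonneg) (simp add: less_imp_le)
  have "beta K r \<kappa> z \<le> (\<Sum>k=1..\<kappa>. r (K + 1 - k))" unfolding beta_def
    using z rr by (intro sum_mono) (simp add: mult_left_le_one_le less_imp_le)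
  then show "beta K r \<kappa> z \<le> sigma r K - sigma r (K - \<kappa>)"
    using beta_sigma[OF kK, of r] by linarith
qed

lemma zeta_props:
  assumes rpos: "\<forall>k\<in>{1..K}. r k > 0" and rlt1: "sigma r K < 1" and kK: "\<kappa> < K"
    and z: "\<forall>k\<in>{1..\<kappa>}. 0 \<le> z k \<and> z k \<le> 1"
  defines "aa \<equiv> 1 + sigma r K - beta K r \<kappa> z"
  shows "0 < zeta_minus K r \<kappa> z" "zeta_minus K r \<kappa> z < 1"
    "aa - zeta_minus K r \<kappa> z \<ge> 1"
    "zeta_minus K r \<kappa> z * (aa - zeta_minus K r \<kappa> z) = sigma r (K - \<kappa>)"
proof -
  let ?s = "sigma r (K - \<kappa>)"
  have s0: "0 < ?s" using sigma_pos[OF rpos, of "K - \<kappa>"] kK by simp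
  have s1: "?s < 1" using sigma_nonneg_mono[OF rpos, of "K - \<kappa>"] rlt1 by simp
  have ac: "aa \<ge> 1 + ?s" using beta_bounds(2)[OF rpos _ z] kK by (simp add: aa_def)
  have zm: "zeta_minus K r \<kappa> z = (aa - sqrt(aa^2 - 4*?s))/2"
    by (simp add: zeta_minus_def aa_def Let_def)
  note R = root_props[OF s0 s1 ac]
  show "0 < zeta_minus K r \<kappa> z" "zeta_minus K r \<kappa> z < 1"
    "aa - zeta_minus K r \<kappa> z \<ge> 1"
    "zeta_minus K r \<kappa> z * (aa - zeta_minus K r \<kappa> z) = ?s"
    using R by (simp_all only: zm)
qed


lemma has_sum_bij:
  assumes "bij_betw h A B" "(g has_sum x) B"
  shows "((\<lambda>a. g (h a)) has_sum x) A"
  using has_sum_reindex[of h A g x] assms by (auto simp: bij_betw_def o_def)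

lemma has_sum_bij_inv:
  assumes "bij_betw h A B" "((\<lambda>a. g (h a)) has_sum x) A"
  shows "(g has_sum x) B"
  using has_sum_reindex[of h A g x] assms by (auto simp: bij_betw_def o_def)

definition wz :: "nat \<Rightarrow> (nat \<Rightarrow> real) \<Rightarrow> (nat \<Rightarrow> nat) \<Rightarrow> real" where
  "wz K z n = (\<Prod>j=2..K. z (K + 1 - j) ^ n j)"

definition slice :: "nat \<Rightarrow> nat \<Rightarrow> (nat \<Rightarrow> nat) set" where
  "slice K l = {n \<in> states K. n 1 = l}"

definition zok :: "nat \<Rightarrow> (nat \<Rightarrow> real) \<Rightarrow> bool" where
  "zok K z \<longleftrightarrow> (\<forall>k\<in>{1..K-1}. 0 \<le> z k \<and> z k \<le> 1)"

lemma genfun_wz: "genfun K p l z = infsum (\<lambda>n. p n * wz K z n) (slice K l)"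
  by (simp add: genfun_def wz_def slice_def)

lemma wz_bounds:
  assumes "zok K z" shows "0 \<le> wz K z n" "wz K z n \<le> 1"
proof -
  have f: "0 \<le> z (K + 1 - j) ^ n j \<and> z (K + 1 - j) ^ n j \<le> 1" if "j \<in> {2..K}" for j
  proof -
    have "K + 1 - j \<in> {1..K-1}" using that by auto
    then have "0 \<le> z (K + 1 - j) \<and> z (K + 1 - j) \<le> 1" using assms by (auto simp: zok_def)
    then show ?thesis by (simp add: power_le_one)
  qed
  show "0 \<le> wz K z n" unfolding wz_def using f by (intro prod_nonneg) auto
  show "wz K z n \<le> 1" unfolding wz_def using f by (intro prod_le_1) auto
qed

lemma wz_upd1: "wz K z (n(1:=v)) = wz K z n"
  unfolding wz_def by (rule prod.cong) auto

lemma wz_upd1': "wz K z (n(Suc 0:=v)) = wz K z n"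
  using wz_upd1 by simp

lemma wz_updk:
  assumes "\<kappa> \<in> {2..K}"
  shows "wz K z (n(\<kappa> := n \<kappa> + 1)) = z (K + 1 - \<kappa>) * wz K z n"
proof -
  have "wz K z (n(\<kappa> := n \<kappa> + 1)) = z (K + 1 - \<kappa>) ^ (n \<kappa> + 1) * (\<Prod>j\<in>{2..K}-{\<kappa>}. z (K + 1 - j) ^ (n(\<kappa> := n \<kappa> + 1)) j)"
    unfolding wz_def using assms by (subst prod.remove[of _ \<kappa>]) auto
  also have "(\<Prod>j\<in>{2..K}-{\<kappa>}. z (K + 1 - j) ^ (n(\<kappa> := n \<kappa> + 1)) j) = (\<Prod>j\<in>{2..K}-{\<kappa>}. z (K + 1 - j) ^ n j)"
    by (rule prod.cong) auto
  also have "z (K + 1 - \<kappa>) ^ (n \<kappa> + 1) * (\<Prod>j\<in>{2..K}-{\<kappa>}. z (K + 1 - j) ^ n j)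
      = z (K + 1 - \<kappa>) * (z (K + 1 - \<kappa>) ^ n \<kappa> * (\<Prod>j\<in>{2..K}-{\<kappa>}. z (K + 1 - j) ^ n j))"
    by simp
  also have "z (K + 1 - \<kappa>) ^ n \<kappa> * (\<Prod>j\<in>{2..K}-{\<kappa>}. z (K + 1 - j) ^ n j) = wz K z n"
    unfolding wz_def using assms by (subst (2) prod.remove[of _ \<kappa>]) auto
  finally show ?thesis .
qed

lemma states_upd: "k \<in> {1..K} \<Longrightarrow> n \<in> states K \<Longrightarrow> n(k := v) \<in> states K"
  by (auto simp: states_def)

locale qsys =
  fixes K :: nat and r :: "nat \<Rightarrow> real" and P :: "(nat \<Rightarrow> nat) \<Rightarrow> real"
  assumes K1: "K \<ge> 1" and rpos: "\<forall>k\<in>{1..K}. r k > 0" and rlt1: "sigma r K < 1"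
    and Psol: "is_normalized_solution K r P"
begin

lemma Pnn: "n \<in> states K \<Longrightarrow> P n \<ge> 0"
  using Psol by (auto simp: is_normalized_solution_def)
lemma Psum: "P summable_on states K"
  using Psol by (auto simp: is_normalized_solution_def)
lemma Pone: "infsum P (states K) = 1"
  using Psol by (auto simp: is_normalized_solution_def)
lemma bal: "n \<in> states K \<Longrightarrow> balance_eq K r P n"
  using Psol by (auto simp: is_normalized_solution_def)

lemma sumP:
  assumes "A \<subseteq> states K" "\<And>n. n \<in> A \<Longrightarrow> 0 \<le> u n \<and> u n \<le> 1"
  shows "(\<lambda>n. P n * u n) summable_on A"
proof (rule summable_on_comparison_test[of P])
  show "P summable_on A" using summable_on_subset_banach[OF Psum assms(1)] .
  fix n assume "n \<in> A"
  then have "0 \<le> P n" "0 \<le> u n" "u n \<le> 1" using assms Pnn by auto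
  then show "P n * u n \<le> P n" "0 \<le> P n * u n" by (auto simp: mult_left_le)
qed

lemma slice_sub: "slice K l \<subseteq> states K" by (auto simp: slice_def)

lemma hs_slice:
  assumes "zok K z"
  shows "((\<lambda>n. P n * wz K z n) has_sum genfun K P l z) (slice K l)"
proof -
  have "(\<lambda>n. P n * wz K z n) summable_on slice K l"
    using sumP[OF slice_sub] wz_bounds[OF assms] by blast
  then show ?thesis by (simp add: genfun_wz)
qed

lemma bij_shift1: "bij_betw (\<lambda>n. n(1 := l')) (slice K l) (slice K l')"
  using K1 by (intro bij_betw_byWitness[where f'="\<lambda>n. n(1 := l)"]) (auto simp: slice_def states_upd)

lemma hs_shift1:
  assumes "zok K z"
  shows "((\<lambda>n. P (n(1:=l')) * wz K z n) has_sum genfun K P l' z) (slice K l)"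
proof -
  have "((\<lambda>n. (\<lambda>m. P m * wz K z m) (n(1:=l'))) has_sum genfun K P l' z) (slice K l)"
    by (rule has_sum_bij[OF bij_shift1 hs_slice[OF assms]])
  then show ?thesis by (simp add: wz_upd1')
qed

lemma hs_shiftk:
  assumes z: "zok K z" and k: "\<kappa> \<in> {2..K}"
  shows "((\<lambda>n. (if n \<kappa> > 0 then P (n(\<kappa> := n \<kappa> - 1)) else 0) * wz K z n)
           has_sum (z (K + 1 - \<kappa>) * genfun K P l z)) (slice K l)"
proof -
  define T where "T = {n \<in> slice K l. n \<kappa> > 0}"
  have kK: "\<kappa> \<in> {1..K}" using k by auto
  have bij: "bij_betw (\<lambda>m. m(\<kappa> := m \<kappa> + 1)) (slice K l) T"
    using k by (intro bij_betw_byWitness[where f'="\<lambda>n. n(\<kappa> := n \<kappa> - 1)"])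
      (auto simp: T_def slice_def states_upd[OF kK])
  have "((\<lambda>m. z (K + 1 - \<kappa>) * (P m * wz K z m)) has_sum (z (K + 1 - \<kappa>) * genfun K P l z)) (slice K l)"
    by (rule has_sum_cmult_right[OF hs_slice[OF z]])
  moreover have "(\<lambda>m. z (K + 1 - \<kappa>) * (P m * wz K z m)) =
      (\<lambda>m. (\<lambda>n. P (n(\<kappa> := n \<kappa> - 1)) * wz K z n) (m(\<kappa> := m \<kappa> + 1)))"
    by (rule ext) (simp only: wz_updk[OF k], simp)
  ultimately have "((\<lambda>m. (\<lambda>n. P (n(\<kappa> := n \<kappa> - 1)) * wz K z n) (m(\<kappa> := m \<kappa> + 1)))
       has_sum (z (K + 1 - \<kappa>) * genfun K P l z)) (slice K l)" by metis
  then have "((\<lambda>n. P (n(\<kappa> := n \<kappa> - 1)) * wz K z n) has_sum (z (K + 1 - \<kappa>) * genfun K P l z)) T"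
    by (rule has_sum_bij_inv[OF bij])
  then show ?thesis
    by (rule has_sum_cong_neutral[THEN iffD2, rotated -1]) (auto simp: T_def)
qed

end


context qsys begin

lemma bal_slice:
  assumes n: "n \<in> slice K l" and l: "l \<ge> 1"
  shows "(1 + sigma r K) * P n = r 1 * P (n(1:=l-1)) + P (n(1:=l+1))
     + (\<Sum>\<kappa>=2..K. r \<kappa> * (if n \<kappa> > 0 then P (n(\<kappa> := n \<kappa> - 1)) else 0))"
proof -
  have nS: "n \<in> states K" and n1: "n 1 = l" using n by (auto simp: slice_def)
  define f where "f \<kappa> = r \<kappa> * (if n \<kappa> > 0 then P (n(\<kappa> := n \<kappa> - 1)) else 0)
        + (if (\<forall>j\<in>{1..<\<kappa>}. n j = 0) then P (n(\<kappa> := n \<kappa> + 1)) else 0)" for \<kappa>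
  have B: "(1 + sigma r K) * P n = (if (\<forall>j\<in>{1..K}. n j = 0) then P n else 0) + (\<Sum>\<kappa>=1..K. f \<kappa>)"
    using bal[OF nS] unfolding balance_eq_def f_def by simp
  have c1: "\<not> (\<forall>j\<in>{1..K}. n j = 0)" using K1 l n1 by force
  have sp: "(\<Sum>\<kappa>=1..K. f \<kappa>) = f 1 + (\<Sum>\<kappa>=2..K. f \<kappa>)"
    using sum.atLeast_Suc_atMost[of 1 K f] K1 by (simp add: numeral_2_eq_2)
  have f1: "f 1 = r 1 * P (n(1:=l-1)) + P (n(1:=l+1))"
    using n1 l by (simp add: f_def)
  have fk: "f \<kappa> = r \<kappa> * (if n \<kappa> > 0 then P (n(\<kappa> := n \<kappa> - 1)) else 0)" if "\<kappa> \<in> {2..K}" for \<kappa>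
  proof -
    have "\<not> (\<forall>j\<in>{1..<\<kappa>}. n j = 0)" using that n1 l by force
    then show ?thesis unfolding f_def by auto
  qed
  have fs: "(\<Sum>\<kappa>=2..K. f \<kappa>) = (\<Sum>\<kappa>=2..K. r \<kappa> * (if n \<kappa> > 0 then P (n(\<kappa> := n \<kappa> - 1)) else 0))"
    by (intro sum.cong refl fk)
  have B': "(1 + sigma r K) * P n = (\<Sum>\<kappa>=1..K. f \<kappa>)" using B unfolding if_not_P[OF c1] by simp
  show ?thesis unfolding B' sp f1 fs ..
qed

lemma slice_rec:
  assumes z: "zok K z" and l: "l \<ge> 1"
  shows "(1 + sigma r K) * genfun K P l z = r 1 * genfun K P (l-1) z + genfun K P (l+1) z
      + (\<Sum>\<kappa>=2..K. r \<kappa> * (z (K + 1 - \<kappa>) * genfun K P l z))"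
proof -
  let ?w = "wz K z"
  let ?R = "r 1 * genfun K P (l-1) z + genfun K P (l+1) z
      + (\<Sum>\<kappa>=2..K. r \<kappa> * (z (K + 1 - \<kappa>) * genfun K P l z))"
  have h1: "((\<lambda>n. r 1 * (P (n(1:=l-1)) * ?w n)) has_sum (r 1 * genfun K P (l-1) z)) (slice K l)"
    by (rule has_sum_cmult_right[OF hs_shift1[OF z]])
  have h2: "((\<lambda>n. P (n(1:=l+1)) * ?w n) has_sum (genfun K P (l+1) z)) (slice K l)"
    by (rule hs_shift1[OF z])
  have h3: "((\<lambda>n. \<Sum>\<kappa>=2..K. r \<kappa> * ((if n \<kappa> > 0 then P (n(\<kappa> := n \<kappa> - 1)) else 0) * ?w n))
       has_sum (\<Sum>\<kappa>=2..K. r \<kappa> * (z (K + 1 - \<kappa>) * genfun K P l z))) (slice K l)"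
  proof (rule has_sum_sum_fin)
    fix \<kappa> assume "\<kappa> \<in> {2..K}"
    then show "((\<lambda>n. r \<kappa> * ((if n \<kappa> > 0 then P (n(\<kappa> := n \<kappa> - 1)) else 0) * ?w n))
       has_sum (r \<kappa> * (z (K + 1 - \<kappa>) * genfun K P l z))) (slice K l)"
      by (intro has_sum_cmult_right hs_shiftk[OF z])
  qed simp
  have H: "((\<lambda>n. r 1 * (P (n(1:=l-1)) * ?w n) + P (n(1:=l+1)) * ?w n
      + (\<Sum>\<kappa>=2..K. r \<kappa> * ((if n \<kappa> > 0 then P (n(\<kappa> := n \<kappa> - 1)) else 0) * ?w n))) has_sum ?R) (slice K l)"
    by (intro has_sum_add h1 h2 h3)
  have E: "r 1 * (P (n(1:=l-1)) * ?w n) + P (n(1:=l+1)) * ?w n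
      + (\<Sum>\<kappa>=2..K. r \<kappa> * ((if n \<kappa> > 0 then P (n(\<kappa> := n \<kappa> - 1)) else 0) * ?w n))
      = (1 + sigma r K) * (P n * ?w n)" if "n \<in> slice K l" for n
  proof -
    have "(1 + sigma r K) * (P n * ?w n) = ((1 + sigma r K) * P n) * ?w n" by simp
    also have "\<dots> = (r 1 * P (n(1:=l-1)) + P (n(1:=l+1))
     + (\<Sum>\<kappa>=2..K. r \<kappa> * (if n \<kappa> > 0 then P (n(\<kappa> := n \<kappa> - 1)) else 0))) * ?w n"
      using bal_slice[OF that l] by simp
    also have "\<dots> = r 1 * (P (n(1:=l-1)) * ?w n) + P (n(1:=l+1)) * ?w n
      + (\<Sum>\<kappa>=2..K. r \<kappa> * ((if n \<kappa> > 0 then P (n(\<kappa> := n \<kappa> - 1)) else 0) * ?w n))"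
      by (simp add: sum_distrib_right distrib_right mult.assoc)
    finally show ?thesis by simp
  qed
  have H2: "((\<lambda>n. (1 + sigma r K) * (P n * ?w n)) has_sum ?R) (slice K l)"
  proof -
    have "((\<lambda>n. (1 + sigma r K) * (P n * ?w n)) has_sum ?R) (slice K l) \<longleftrightarrow>
      ((\<lambda>n. r 1 * (P (n(1:=l-1)) * ?w n) + P (n(1:=l+1)) * ?w n
      + (\<Sum>\<kappa>=2..K. r \<kappa> * ((if n \<kappa> > 0 then P (n(\<kappa> := n \<kappa> - 1)) else 0) * ?w n))) has_sum ?R) (slice K l)"
      by (rule has_sum_cong, rule E[symmetric], assumption)
    then show ?thesis using H by blast
  qed
  have H3: "((\<lambda>n. (1 + sigma r K) * (P n * ?w n)) has_sum ((1 + sigma r K) * genfun K P l z)) (slice K l)"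
    by (rule has_sum_cmult_right[OF hs_slice[OF z]])
  show ?thesis using has_sum_unique[OF H3 H2] .
qed

end


definition Fz :: "nat \<Rightarrow> ((nat \<Rightarrow> nat) \<Rightarrow> real) \<Rightarrow> real \<Rightarrow> (nat \<Rightarrow> real) \<Rightarrow> real" where
  "Fz K p x1 z = infsum (\<lambda>n. p n * (x1 ^ n 1 * wz K z n)) (states K)"

lemma beta_reindex:
  "beta K r (K-1) z = (\<Sum>\<kappa>=2..K. r \<kappa> * z (K + 1 - \<kappa>))"
proof -
  have "(\<Sum>\<kappa>=2..K. r \<kappa> * z (K + 1 - \<kappa>)) = (\<Sum>k=1..K-1. z k * r (K + 1 - k))"
    by (rule sum.reindex_bij_witness[where i="\<lambda>k. K + 1 - k" and j="\<lambda>\<kappa>. K + 1 - \<kappa>"]) auto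
  then show ?thesis by (simp add: beta_def)
qed

lemma sigma_1: "sigma r 1 = r 1" by (simp add: sigma_def)
lemma sigma_Suc0: "sigma r (Suc 0) = r (Suc 0)" by (simp add: sigma_def)

context qsys begin

lemma slice_fiber:
  fixes f :: "(nat \<Rightarrow> nat) \<Rightarrow> real"
  assumes "f summable_on states K"
  shows "(\<lambda>b. infsum f (slice K b)) summable_on UNIV"
    "infsum f (states K) = infsum (\<lambda>b. infsum f (slice K b)) UNIV"
  using infsum_fiber[OF assms, of "\<lambda>n. n 1" UNIV] by (simp_all add: slice_def)

lemma genfun_nonneg: "zok K z \<Longrightarrow> genfun K P l z \<ge> 0"
  unfolding genfun_wz
  by (rule infsum_nonneg) (auto simp: slice_def intro!: mult_nonneg_nonneg Pnn wz_bounds)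

lemma slice_geo:
  assumes z: "zok K z"
  shows "genfun K P l z = genfun K P 0 z * zeta_minus K r (K-1) z ^ l"
proof -
  let ?g = "\<lambda>l. genfun K P l z"
  let ?b = "beta K r (K-1) z"
  let ?A = "1 + sigma r K - ?b"
  let ?\<zeta> = "zeta_minus K r (K-1) z"
  have zc: "\<forall>k\<in>{1..K-1}. 0 \<le> z k \<and> z k \<le> 1" using z by (simp add: zok_def)
  have KK: "K - 1 < K" using K1 by simp
  note ZP = zeta_props[OF rpos rlt1 KK zc]
  have prod: "?\<zeta> * (?A - ?\<zeta>) = r 1" using ZP(4) K1 by (simp add: sigma_Suc0)
  have rec: "?g (l+1) = (?\<zeta> + (?A - ?\<zeta>)) * ?g l - (?\<zeta> * (?A - ?\<zeta>)) * ?g (l-1)" if "l \<ge> 1" for l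
  proof -
    have "(\<Sum>\<kappa>=2..K. r \<kappa> * (z (K + 1 - \<kappa>) * ?g l)) = ?b * ?g l"
      using beta_reindex[of K r z] by (simp add: sum_distrib_right mult.assoc)
    then show ?thesis using slice_rec[OF z that] prod by (simp add: algebra_simps)
  qed
  have bnd: "(\<Sum>l<N. ?g l) \<le> 1" for N
  proof -
    let ?f = "\<lambda>n. P n * wz K z n"
    have fs: "?f summable_on states K" using sumP[of "states K"] wz_bounds[OF z] by blast
    note SF = slice_fiber[OF fs]
    have "(\<Sum>l<N. ?g l) \<le> infsum ?g UNIV"
      using SF(1) by (intro finite_sum_le_infsum) (auto simp: genfun_wz genfun_nonneg[OF z, unfolded genfun_wz])
    also have "\<dots> = infsum ?f (states K)" using SF(2) by (simp add: genfun_wz)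
    also have "\<dots> \<le> infsum P (states K)"
      using fs Psum by (intro infsum_mono) (auto simp: Pnn wz_bounds[OF z] mult_left_le)
    finally show ?thesis using Pone by simp
  qed
  show ?thesis
    by (rule rec_solve[where \<zeta>' = "?A - ?\<zeta>"]) (use rec ZP bnd genfun_nonneg[OF z] in auto)
qed

lemma Fz_formula:
  assumes z: "zok K z" and x: "0 \<le> x1" "x1 \<le> 1"
  shows "Fz K P x1 z = genfun K P 0 z / (1 - x1 * zeta_minus K r (K-1) z)"
proof -
  let ?\<zeta> = "zeta_minus K r (K-1) z"
  let ?q = "x1 * ?\<zeta>"
  have zc: "\<forall>k\<in>{1..K-1}. 0 \<le> z k \<and> z k \<le> 1" using z by (simp add: zok_def)
  have KK: "K - 1 < K" using K1 by simp
  note ZP = zeta_props[OF rpos rlt1 KK zc]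
  have q0: "0 \<le> ?q" using x ZP by simp
  have q1: "?q < 1"
  proof -
    have "?q \<le> ?\<zeta>" using x ZP by (simp add: mult_left_le_one_le)
    then show ?thesis using ZP by linarith
  qed
  let ?f = "\<lambda>n. P n * (x1 ^ n 1 * wz K z n)"
  have ub: "0 \<le> x1 ^ n 1 * wz K z n \<and> x1 ^ n 1 * wz K z n \<le> 1" for n
    using wz_bounds[OF z, of n] x by (auto simp: mult_le_one power_le_one)
  have fs: "?f summable_on states K" using sumP[of "states K" "\<lambda>n. x1 ^ n 1 * wz K z n"] ub by blast
  note SF = slice_fiber[OF fs]
  have sl: "infsum ?f (slice K b) = genfun K P 0 z * ?q ^ b" for b
  proof -
    have "infsum ?f (slice K b) = infsum (\<lambda>n. x1 ^ b * (P n * wz K z n)) (slice K b)"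
      by (rule infsum_cong) (auto simp: slice_def)
    also have "\<dots> = x1 ^ b * genfun K P b z"
      by (simp add: infsum_cmult_right' genfun_wz)
    also have "\<dots> = genfun K P 0 z * ?q ^ b"
      using slice_geo[OF z, of b] by (simp add: power_mult_distrib)
    finally show ?thesis .
  qed
  have g0: "genfun K P 0 z \<ge> 0" by (rule genfun_nonneg[OF z])
  have "(\<lambda>b. genfun K P 0 z * ?q ^ b) sums (genfun K P 0 z * (1 / (1 - ?q)))"
    using geometric_sums[of ?q] q0 q1 by (intro sums_mult) auto
  then have hs: "((\<lambda>b. genfun K P 0 z * ?q ^ b) has_sum (genfun K P 0 z * (1 / (1 - ?q)))) UNIV"
    using g0 q0 by (intro sums_nonneg_imp_has_sum) auto
  have "Fz K P x1 z = infsum (\<lambda>b. genfun K P 0 z * ?q ^ b) UNIV"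
    unfolding Fz_def SF(2) sl ..
  also have "\<dots> = genfun K P 0 z * (1 / (1 - ?q))" using hs by (simp add: infsumI)
  finally show ?thesis by simp
qed

end


definition mr :: "(nat \<Rightarrow> real) \<Rightarrow> nat \<Rightarrow> real" where
  "mr r k = (if k = 1 then r 1 + r 2 else r (k+1))"
definition mergeS :: "(nat \<Rightarrow> nat) \<Rightarrow> nat \<Rightarrow> nat" where
  "mergeS n k = (if k = 0 then 0 else if k = 1 then n 1 + n 2 else n (k+1))"
definition unm :: "(nat \<Rightarrow> nat) \<Rightarrow> nat \<Rightarrow> nat \<Rightarrow> nat" where
  "unm m i k = (if k = 0 then 0 else if k = 1 then i else if k = 2 then m 1 - i else m (k-1))"
definition Pm :: "((nat \<Rightarrow> nat) \<Rightarrow> real) \<Rightarrow> (nat \<Rightarrow> nat) \<Rightarrow> real" where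
  "Pm P m = (\<Sum>i\<le>m 1. P (unm m i))"

lemma sigma_mr_Suc: "sigma (mr r) (Suc k) = sigma r (Suc (Suc k))"
proof (induction k)
  case 0 then show ?case by (simp add: sigma_def mr_def numeral_2_eq_2)
next
  case (Suc k)
  have a: "sigma f (Suc j) = sigma f j + f (Suc j)" for f :: "nat \<Rightarrow> real" and j
    unfolding sigma_def using sum.nat_ivl_Suc'[of 1 j f] by simp
  have "mr r (Suc (Suc k)) = r (Suc (Suc (Suc k)))" by (simp add: mr_def)
  then show ?case using Suc.IH a[of "mr r" "Suc k"] a[of r "Suc (Suc k)"] by linarith
qed

lemma sigma_mr: "K \<ge> 2 \<Longrightarrow> sigma (mr r) (K-1) = sigma r K"
  using sigma_mr_Suc[of r "K-2"] by (simp add: numeral_2_eq_2 Suc_diff_Suc)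

lemma mr_pos:
  assumes K2: "K \<ge> 2" and rp: "\<forall>k\<in>{1..K}. r k > 0"
  shows "\<forall>k\<in>{1..K-1}. mr r k > 0"
proof
  fix k assume k: "k \<in> {1..K-1}"
  show "mr r k > 0"
  proof (cases "k = 1")
    case True
    have "r 1 > 0" "r 2 > 0" using rp K2 by auto
    then show ?thesis using True by (simp add: mr_def)
  next
    case False
    have "k + 1 \<in> {1..K}" using k by auto
    then show ?thesis using False rp by (simp add: mr_def)
  qed
qed

lemma zeta_mr:
  assumes K2: "K \<ge> 2" and k: "\<kappa> \<le> K - 2"
  shows "zeta_minus (K-1) (mr r) \<kappa> z = zeta_minus K r \<kappa> z"
proof -
  have b: "beta (K-1) (mr r) \<kappa> z = beta K r \<kappa> z"
    unfolding beta_def using K2 k by (intro sum.cong) (auto simp: mr_def Suc_diff_le)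
  have s: "sigma (mr r) (K - 1 - \<kappa>) = sigma r (K - \<kappa>)"
  proof -
    have e1: "K - 1 - \<kappa> = Suc (K - 2 - \<kappa>)" using K2 k by arith
    have e2: "K - \<kappa> = Suc (Suc (K - 2 - \<kappa>))" using K2 k by arith
    show ?thesis unfolding e1 e2 by (rule sigma_mr_Suc)
  qed
  show ?thesis unfolding zeta_minus_def b s sigma_mr[OF K2] ..
qed

lemma unm_states:
  assumes K2: "K \<ge> 2" and m: "m \<in> states (K-1)"
  shows "unm m i \<in> states K"
proof -
  have mz: "m j = 0" if "j \<notin> {1..K-1}" for j using m that by (simp add: states_def)
  { fix k assume k: "k \<notin> {1..K}"
    then have "k = 0 \<or> k > K" by auto
    then have "unm m i k = 0"
    proof
      assume "k = 0" thus ?thesis by (simp add: unm_def)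
    next
      assume "k > K"
      then have "k \<noteq> 1" "k \<noteq> 2" "k \<noteq> 0" "k - 1 \<notin> {1..K-1}" using K2 by auto
      thus ?thesis using mz[of "k-1"] by (simp add: unm_def)
    qed }
  then show ?thesis by (simp add: states_def)
qed

lemma mergeS_states: "K \<ge> 2 \<Longrightarrow> n \<in> states K \<Longrightarrow> mergeS n \<in> states (K-1)"
  by (auto simp: states_def mergeS_def)

lemma mergeS_unm: "K \<ge> 2 \<Longrightarrow> m \<in> states (K-1) \<Longrightarrow> i \<le> m 1 \<Longrightarrow> mergeS (unm m i) = m"
  by (rule ext) (auto simp: states_def mergeS_def unm_def)

lemma unm_mergeS: "K \<ge> 2 \<Longrightarrow> n \<in> states K \<Longrightarrow> unm (mergeS n) (n 1) = n"
  by (rule ext) (auto simp: states_def mergeS_def unm_def)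

lemma unm_1: "unm m i 1 = i" by (simp add: unm_def)

lemma fiber_eq:
  assumes K2: "K \<ge> 2" and m: "m \<in> states (K-1)"
  shows "{n \<in> states K. mergeS n = m} = unm m ` {..m 1}"
proof
  show "{n \<in> states K. mergeS n = m} \<subseteq> unm m ` {..m 1}"
  proof
    fix n assume "n \<in> {n \<in> states K. mergeS n = m}"
    then have n: "n \<in> states K" "mergeS n = m" by auto
    then have "n = unm m (n 1)" using unm_mergeS[OF K2 n(1)] by simp
    moreover have "n 1 \<le> m 1" using n(2) by (auto simp: mergeS_def)
    ultimately show "n \<in> unm m ` {..m 1}" by blast
  qed
  show "unm m ` {..m 1} \<subseteq> {n \<in> states K. mergeS n = m}"
    using unm_states[OF K2 m] mergeS_unm[OF K2 m] by auto
qed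

lemma inj_unm: "inj_on (unm m) A"
  by (rule inj_onI) (metis unm_1)

lemma fiber_sum:
  fixes f :: "(nat \<Rightarrow> nat) \<Rightarrow> real"
  assumes K2: "K \<ge> 2" and m: "m \<in> states (K-1)"
  shows "infsum f {n \<in> states K. mergeS n = m} = (\<Sum>i\<le>m 1. f (unm m i))"
  unfolding fiber_eq[OF K2 m] by (simp add: sum.reindex[OF inj_unm])

lemma merge_fiber:
  fixes f :: "(nat \<Rightarrow> nat) \<Rightarrow> real"
  assumes K2: "K \<ge> 2" and fs: "f summable_on states K"
  shows "(\<lambda>m. \<Sum>i\<le>m 1. f (unm m i)) summable_on states (K-1)"
    "infsum f (states K) = infsum (\<lambda>m. \<Sum>i\<le>m 1. f (unm m i)) (states (K-1))"
proof -
  have hB: "mergeS ` states K \<subseteq> states (K-1)" using mergeS_states[OF K2] by auto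
  note IF = infsum_fiber[OF fs hB]
  have c: "infsum f {n \<in> states K. mergeS n = m} = (\<Sum>i\<le>m 1. f (unm m i))" if "m \<in> states (K-1)" for m
    by (rule fiber_sum[OF K2 that])
  show "(\<lambda>m. \<Sum>i\<le>m 1. f (unm m i)) summable_on states (K-1)"
  proof -
    have "(\<lambda>m. infsum f {n \<in> states K. mergeS n = m}) summable_on states (K-1) \<longleftrightarrow>
      (\<lambda>m. \<Sum>i\<le>m 1. f (unm m i)) summable_on states (K-1)"
      by (rule summable_on_cong) (rule c)
    then show ?thesis using IF(1) by blast
  qed
  show "infsum f (states K) = infsum (\<lambda>m. \<Sum>i\<le>m 1. f (unm m i)) (states (K-1))"
  proof -
    have "infsum (\<lambda>m. infsum f {n \<in> states K. mergeS n = m}) (states (K-1)) =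
      infsum (\<lambda>m. \<Sum>i\<le>m 1. f (unm m i)) (states (K-1))"
      by (rule infsum_cong) (rule c)
    then show ?thesis using IF(2) by simp
  qed
qed


definition Eb :: "(nat \<Rightarrow> real) \<Rightarrow> ((nat \<Rightarrow> nat) \<Rightarrow> real) \<Rightarrow> nat \<Rightarrow> (nat \<Rightarrow> nat) \<Rightarrow> real" where
  "Eb r p \<kappa> n = r \<kappa> * (if n \<kappa> > 0 then p (n(\<kappa> := n \<kappa> - 1)) else 0)"
definition Db :: "((nat \<Rightarrow> nat) \<Rightarrow> real) \<Rightarrow> nat \<Rightarrow> (nat \<Rightarrow> nat) \<Rightarrow> real" where
  "Db p \<kappa> n = (if (\<forall>j\<in>{1..<\<kappa>}. n j = 0) then p (n(\<kappa> := n \<kappa> + 1)) else 0)"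
definition Zb :: "nat \<Rightarrow> ((nat \<Rightarrow> nat) \<Rightarrow> real) \<Rightarrow> (nat \<Rightarrow> nat) \<Rightarrow> real" where
  "Zb K p n = (if (\<forall>j\<in>{1..K}. n j = 0) then p n else 0)"

lemma balance_eq_alt:
  "balance_eq K r p n \<longleftrightarrow> (1 + sigma r K) * p n = Zb K p n + (\<Sum>\<kappa>=1..K. Eb r p \<kappa> n + Db p \<kappa> n)"
  by (simp add: balance_eq_def Eb_def Db_def Zb_def)

lemma unm_1' [simp]: "unm m i (Suc 0) = i" by (simp add: unm_def)

lemma sum_first: "(\<Sum>i\<le>Suc M. f i) = f 0 + (\<Sum>i\<le>M. f (Suc i))"
  by (rule sum.atMost_Suc_shift)

lemma E1:
  "(\<Sum>i\<le>m 1. Eb r P 1 (unm m i)) = r 1 * (if m 1 > 0 then Pm P (m(1 := m 1 - 1)) else 0)"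
proof (cases "m 1")
  case 0 then show ?thesis by (simp add: Eb_def unm_def)
next
  case (Suc M)
  let ?m = "m(1 := m 1 - 1)"
  have u: "(unm m (Suc i))(1 := Suc i - 1) = unm ?m i" if "i \<le> M" for i
    using that Suc by (intro ext) (auto simp: unm_def)
  have "(\<Sum>i\<le>m 1. Eb r P 1 (unm m i)) = Eb r P 1 (unm m 0) + (\<Sum>i\<le>M. Eb r P 1 (unm m (Suc i)))"
    unfolding Suc by (rule sum_first)
  also have "Eb r P 1 (unm m 0) = 0" by (simp add: Eb_def unm_def)
  also have "(\<Sum>i\<le>M. Eb r P 1 (unm m (Suc i))) = (\<Sum>i\<le>M. r 1 * P (unm ?m i))"
  proof (rule sum.cong[OF refl])
    fix i assume "i \<in> {..M}"
    then show "Eb r P 1 (unm m (Suc i)) = r 1 * P (unm ?m i)"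
      using u[of i] by (simp add: Eb_def unm_1)
  qed
  also have "\<dots> = r 1 * Pm P ?m" using Suc by (simp add: Pm_def sum_distrib_left)
  finally show ?thesis using Suc by simp
qed

lemma E2:
  "(\<Sum>i\<le>m 1. Eb r P 2 (unm m i)) = r 2 * (if m 1 > 0 then Pm P (m(1 := m 1 - 1)) else 0)"
proof (cases "m 1")
  case 0 then show ?thesis by (simp add: Eb_def unm_def)
next
  case (Suc M)
  let ?m = "m(1 := m 1 - 1)"
  have u: "(unm m i)(2 := unm m i 2 - 1) = unm ?m i" if "i \<le> M" for i
    using that Suc by (intro ext) (auto simp: unm_def)
  have "(\<Sum>i\<le>m 1. Eb r P 2 (unm m i)) = (\<Sum>i\<le>M. Eb r P 2 (unm m i)) + Eb r P 2 (unm m (Suc M))"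
    unfolding Suc by simp
  also have "Eb r P 2 (unm m (Suc M)) = 0" using Suc by (simp add: Eb_def unm_def)
  also have "(\<Sum>i\<le>M. Eb r P 2 (unm m i)) = (\<Sum>i\<le>M. r 2 * P (unm ?m i))"
  proof (rule sum.cong[OF refl])
    fix i assume i: "i \<in> {..M}"
    have "unm m i 2 > 0" using i Suc by (simp add: unm_def)
    then show "Eb r P 2 (unm m i) = r 2 * P (unm ?m i)"
      using u[of i] i by (simp add: Eb_def)
  qed
  also have "\<dots> = r 2 * Pm P ?m" using Suc by (simp add: Pm_def sum_distrib_left)
  finally show ?thesis using Suc by simp
qed

lemma D12:
  "(\<Sum>i\<le>m 1. Db P 1 (unm m i) + Db P 2 (unm m i)) = Pm P (m(1 := m 1 + 1))"
proof -
  let ?m = "m(1 := m 1 + 1)"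
  have a: "Db P 1 (unm m i) = P (unm ?m (Suc i))" if "i \<le> m 1" for i
  proof -
    have "(unm m i)(1 := unm m i 1 + 1) = unm ?m (Suc i)"
      using that by (intro ext) (auto simp: unm_def)
    then show ?thesis by (simp add: Db_def)
  qed
  have b: "Db P 2 (unm m i) = (if i = 0 then P (unm ?m 0) else 0)" for i
  proof -
    have "(unm m 0)(2 := unm m 0 2 + 1) = unm ?m 0"
      by (intro ext) (auto simp: unm_def)
    moreover have "(\<forall>j\<in>{1..<2}. unm m i j = 0) \<longleftrightarrow> i = 0" by (auto simp: unm_def)
    ultimately show ?thesis by (auto simp: Db_def)
  qed
  have "(\<Sum>i\<le>m 1. Db P 1 (unm m i) + Db P 2 (unm m i))
      = (\<Sum>i\<le>m 1. P (unm ?m (Suc i))) + (\<Sum>i\<le>m 1. (if i = 0 then P (unm ?m 0) else 0))"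
  proof -
    have "(\<Sum>i\<le>m 1. Db P 1 (unm m i)) = (\<Sum>i\<le>m 1. P (unm ?m (Suc i)))"
      by (intro sum.cong refl a) simp
    then show ?thesis by (simp add: sum.distrib b)
  qed
  also have "(\<Sum>i\<le>m 1. (if i = 0 then P (unm ?m 0) else 0)) = P (unm ?m 0)"
    by (simp add: sum.delta)
  also have "(\<Sum>i\<le>m 1. P (unm ?m (Suc i))) + P (unm ?m 0) = (\<Sum>i\<le>Suc (m 1). P (unm ?m i))"
    using sum_first[of "\<lambda>i. P (unm ?m i)" "m 1"] by simp
  also have "\<dots> = Pm P ?m" by (simp add: Pm_def)
  finally show ?thesis .
qed

lemma Ek:
  assumes k: "\<kappa> \<in> {3..K}"
  shows "(\<Sum>i\<le>m 1. Eb r P \<kappa> (unm m i)) = Eb (mr r) (Pm P) (\<kappa>-1) m"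
proof -
  let ?m = "m(\<kappa>-1 := m (\<kappa>-1) - 1)"
  have u: "(unm m i)(\<kappa> := m (\<kappa>-1) - 1) = unm ?m i" for i
    using k by (intro ext) (auto simp: unm_def)
  have uk: "unm m i \<kappa> = m (\<kappa>-1)" for i using k by (simp add: unm_def)
  have k1: "\<kappa> - 1 \<noteq> 1" using k by auto
  have k2: "\<kappa> - 1 + 1 = \<kappa>" using k by auto
  have m1: "?m 1 = m 1" using k1 by simp
  have mr: "mr r (\<kappa>-1) = r \<kappa>" using k1 k2 by (simp add: mr_def)
  have "(\<Sum>i\<le>m 1. Eb r P \<kappa> (unm m i)) = (\<Sum>i\<le>m 1. r \<kappa> * (if m (\<kappa>-1) > 0 then P (unm ?m i) else 0))"
    by (rule sum.cong[OF refl]) (simp only: Eb_def uk u)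
  also have "\<dots> = r \<kappa> * (if m (\<kappa>-1) > 0 then Pm P ?m else 0)"
    using m1 by (simp add: Pm_def sum_distrib_left)
  also have "\<dots> = Eb (mr r) (Pm P) (\<kappa>-1) m" by (simp only: Eb_def mr)
  finally show ?thesis .
qed

lemma Dk:
  assumes k: "\<kappa> \<in> {3..K}"
  shows "(\<Sum>i\<le>m 1. Db P \<kappa> (unm m i)) = Db (Pm P) (\<kappa>-1) m"
proof (cases "\<forall>j\<in>{1..<\<kappa>-1}. m j = 0")
  case True
  let ?m = "m(\<kappa>-1 := m (\<kappa>-1) + 1)"
  have M0: "m 1 = 0" using True k by auto
  have c: "\<forall>j\<in>{1..<\<kappa>}. unm m 0 j = 0"
  proof
    fix j assume j: "j \<in> {1..<\<kappa>}"
    show "unm m 0 j = 0"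
    proof (cases "j \<le> 2")
      case True then show ?thesis using M0 j by (auto simp: unm_def)
    next
      case False
      then have "j - 1 \<in> {1..<\<kappa>-1}" using j by auto
      then show ?thesis using \<open>\<forall>j\<in>{1..<\<kappa>-1}. m j = 0\<close> False by (auto simp: unm_def)
    qed
  qed
  have u: "(unm m 0)(\<kappa> := unm m 0 \<kappa> + 1) = unm ?m 0"
    using k by (intro ext) (auto simp: unm_def)
  have k1: "\<kappa> - 1 \<noteq> 1" using k by auto
  have m1: "?m 1 = 0" using k1 M0 by simp
  have "(\<Sum>i\<le>m 1. Db P \<kappa> (unm m i)) = Db P \<kappa> (unm m 0)" using M0 by simp
  also have "\<dots> = P (unm ?m 0)" using c u by (simp add: Db_def)
  also have "\<dots> = Pm P ?m" using m1 by (simp add: Pm_def)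
  also have "\<dots> = Db (Pm P) (\<kappa>-1) m" using True by (simp add: Db_def)
  finally show ?thesis .
next
  case False
  then obtain j where j: "j \<in> {1..<\<kappa>-1}" "m j \<noteq> 0" by auto
  have z: "Db P \<kappa> (unm m i) = 0" for i
  proof -
    have "\<not> (\<forall>j\<in>{1..<\<kappa>}. unm m i j = 0)"
    proof (cases "j = 1")
      case True
      show ?thesis
      proof (cases "i = 0")
        case True
        then have "unm m i 2 \<noteq> 0" using j \<open>j = 1\<close> by (simp add: unm_def)
        moreover have "2 \<in> {1..<\<kappa>}" using k by auto
        ultimately show ?thesis by metis
      next
        case False
        then have "unm m i 1 \<noteq> 0" by (simp add: unm_def)
        moreover have "1 \<in> {1..<\<kappa>}" using k by auto
        ultimately show ?thesis by metis
      qed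
    next
      case False
      then have "unm m i (j+1) \<noteq> 0" using j by (simp add: unm_def)
      moreover have "j + 1 \<in> {1..<\<kappa>}" using j by auto
      ultimately show ?thesis by metis
    qed
    then show ?thesis unfolding Db_def by (rule if_not_P)
  qed
  have "Db (Pm P) (\<kappa>-1) m = 0" unfolding Db_def by (rule if_not_P[OF False])
  then show ?thesis using z by simp
qed

lemma Zsum:
  assumes K2: "K \<ge> 2"
  shows "(\<Sum>i\<le>m 1. Zb K P (unm m i)) = Zb (K-1) (Pm P) m"
proof (cases "\<forall>j\<in>{1..K-1}. m j = 0")
  case True
  have M0: "m 1 = 0" using True K2 by auto
  have c: "\<forall>j\<in>{1..K}. unm m 0 j = 0"
  proof
    fix j assume j: "j \<in> {1..K}"
    show "unm m 0 j = 0"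
    proof (cases "j \<le> 2")
      case True then show ?thesis using M0 j by (auto simp: unm_def)
    next
      case False
      then have "j - 1 \<in> {1..K-1}" using j by auto
      then show ?thesis using \<open>\<forall>j\<in>{1..K-1}. m j = 0\<close> False by (auto simp: unm_def)
    qed
  qed
  have "(\<Sum>i\<le>m 1. Zb K P (unm m i)) = Zb K P (unm m 0)" using M0 by simp
  also have "\<dots> = P (unm m 0)" using c by (simp add: Zb_def)
  also have "\<dots> = Pm P m" using M0 by (simp add: Pm_def)
  also have "\<dots> = Zb (K-1) (Pm P) m" using True by (simp add: Zb_def)
  finally show ?thesis .
next
  case False
  then obtain j where j: "j \<in> {1..K-1}" "m j \<noteq> 0" by auto
  have z: "Zb K P (unm m i) = 0" for i
  proof -
    have "\<not> (\<forall>j\<in>{1..K}. unm m i j = 0)"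
    proof (cases "j = 1")
      case True
      show ?thesis
      proof (cases "i = 0")
        case True
        then have "unm m i 2 \<noteq> 0" using j \<open>j = 1\<close> by (simp add: unm_def)
        moreover have "2 \<in> {1..K}" using K2 by auto
        ultimately show ?thesis by metis
      next
        case False
        then have "unm m i 1 \<noteq> 0" by (simp add: unm_def)
        moreover have "1 \<in> {1..K}" using K2 by auto
        ultimately show ?thesis by metis
      qed
    next
      case False
      then have "unm m i (j+1) \<noteq> 0" using j by (simp add: unm_def)
      moreover have "j + 1 \<in> {1..K}" using j by auto
      ultimately show ?thesis by metis
    qed
    then show ?thesis unfolding Zb_def by (rule if_not_P)
  qed
  have "Zb (K-1) (Pm P) m = 0" unfolding Zb_def by (rule if_not_P[OF False])
  then show ?thesis using z by simp
qed


lemma split12: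
  fixes G :: "nat \<Rightarrow> real"
  assumes "K \<ge> 2"
  shows "(\<Sum>\<kappa>=1..K. G \<kappa>) = G 1 + G 2 + (\<Sum>\<kappa>=3..K. G \<kappa>)"
proof -
  have "(\<Sum>\<kappa>=1..K. G \<kappa>) = G 1 + (\<Sum>\<kappa>=Suc 1..K. G \<kappa>)"
    using assms by (intro sum.atLeast_Suc_atMost) auto
  also have "(\<Sum>\<kappa>=Suc 1..K. G \<kappa>) = G 2 + (\<Sum>\<kappa>=Suc 2..K. G \<kappa>)"
    using assms by (simp add: numeral_2_eq_2 sum.atLeast_Suc_atMost)
  finally show ?thesis by (simp add: numeral_3_eq_3 numeral_2_eq_2)
qed

lemma split1':
  fixes G :: "nat \<Rightarrow> real"
  assumes "K \<ge> 2"
  shows "(\<Sum>\<kappa>=1..K-1. G \<kappa>) = G 1 + (\<Sum>\<kappa>=3..K. G (\<kappa>-1))"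
proof -
  have a: "(\<Sum>\<kappa>=1..K-1. G \<kappa>) = G 1 + (\<Sum>\<kappa>=Suc 1..K-1. G \<kappa>)"
    using assms by (intro sum.atLeast_Suc_atMost) auto
  have "(\<Sum>\<kappa>=3..K. G (\<kappa>-1)) = (\<Sum>\<kappa>=Suc 2..Suc (K-1). G (\<kappa>-1))"
    using assms by (simp add: numeral_3_eq_3 numeral_2_eq_2)
  also have "\<dots> = (\<Sum>\<kappa>=2..K-1. G (Suc \<kappa> - 1))" by (rule sum.shift_bounds_cl_Suc_ivl)
  finally have b: "(\<Sum>\<kappa>=3..K. G (\<kappa>-1)) = (\<Sum>\<kappa>=2..K-1. G \<kappa>)" by simp
  show ?thesis using a b by (simp add: numeral_2_eq_2)
qed

lemma Pm_balance:
  assumes K2: "K \<ge> 2" and B: "\<forall>i\<le>m 1. balance_eq K r P (unm m i)"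
  shows "balance_eq (K-1) (mr r) (Pm P) m"
proof -
  let ?n = "unm m"
  define F where "F \<kappa> n = Eb r P \<kappa> n + Db P \<kappa> n" for \<kappa> n
  define F' where "F' \<kappa> = Eb (mr r) (Pm P) \<kappa> m + Db (Pm P) \<kappa> m" for \<kappa>
  have "(1 + sigma (mr r) (K-1)) * Pm P m = (\<Sum>i\<le>m 1. (1 + sigma r K) * P (?n i))"
    using sigma_mr[OF K2, of r] by (simp add: Pm_def sum_distrib_left)
  also have "\<dots> = (\<Sum>i\<le>m 1. Zb K P (?n i) + (\<Sum>\<kappa>=1..K. F \<kappa> (?n i)))"
    using B by (intro sum.cong refl) (auto simp: balance_eq_alt F_def)
  also have "\<dots> = (\<Sum>i\<le>m 1. Zb K P (?n i)) + (\<Sum>\<kappa>=1..K. (\<Sum>i\<le>m 1. F \<kappa> (?n i)))"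
    by (simp add: sum.distrib) (rule sum.swap)
  also have "(\<Sum>i\<le>m 1. Zb K P (?n i)) = Zb (K-1) (Pm P) m" by (rule Zsum[OF K2])
  also have "(\<Sum>\<kappa>=1..K. (\<Sum>i\<le>m 1. F \<kappa> (?n i))) =
      (\<Sum>i\<le>m 1. F 1 (?n i)) + (\<Sum>i\<le>m 1. F 2 (?n i)) + (\<Sum>\<kappa>=3..K. (\<Sum>i\<le>m 1. F \<kappa> (?n i)))"
    by (rule split12[OF K2])
  also have "(\<Sum>i\<le>m 1. F 1 (?n i)) + (\<Sum>i\<le>m 1. F 2 (?n i)) = F' 1"
  proof -
    have "(\<Sum>i\<le>m 1. F 1 (?n i)) + (\<Sum>i\<le>m 1. F 2 (?n i)) =
      (\<Sum>i\<le>m 1. Eb r P 1 (?n i)) + (\<Sum>i\<le>m 1. Eb r P 2 (?n i)) + (\<Sum>i\<le>m 1. Db P 1 (?n i) + Db P 2 (?n i))"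
      by (simp add: F_def sum.distrib)
    also have "\<dots> = (r 1 + r 2) * (if m 1 > 0 then Pm P (m(1 := m 1 - 1)) else 0) + Pm P (m(1 := m 1 + 1))"
      unfolding E1 E2 D12 by (simp add: distrib_right)
    also have "\<dots> = F' 1" by (simp add: F'_def Eb_def Db_def mr_def)
    finally show ?thesis .
  qed
  also have "(\<Sum>\<kappa>=3..K. (\<Sum>i\<le>m 1. F \<kappa> (?n i))) = (\<Sum>\<kappa>=3..K. F' (\<kappa>-1))"
  proof (rule sum.cong[OF refl])
    fix \<kappa> assume k: "\<kappa> \<in> {3..K}"
    show "(\<Sum>i\<le>m 1. F \<kappa> (?n i)) = F' (\<kappa>-1)"
      unfolding F_def F'_def sum.distrib Ek[OF k] Dk[OF k] ..
  qed
  also have "F' 1 + (\<Sum>\<kappa>=3..K. F' (\<kappa>-1)) = (\<Sum>\<kappa>=1..K-1. F' \<kappa>)"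
    by (rule split1'[OF K2, symmetric])
  finally have "(1 + sigma (mr r) (K-1)) * Pm P m = Zb (K-1) (Pm P) m + (\<Sum>\<kappa>=1..K-1. F' \<kappa>)"
    by (simp add: add.assoc)
  then show ?thesis by (simp add: balance_eq_alt F'_def)
qed


lemma wz_unm:
  assumes K2: "K \<ge> 2" and i: "i \<le> m 1"
  shows "z (K-1) ^ i * wz K z (unm m i) = z (K-1) ^ m 1 * wz (K-1) z m"
proof -
  obtain K' where K': "K = Suc K'" using K2 by (cases K) auto
  have a: "wz K z (unm m i) = z (K-1) ^ (m 1 - i) * (\<Prod>j=Suc 2..K. z (K + 1 - j) ^ unm m i j)"
    unfolding wz_def using K2 by (subst prod.atLeast_Suc_atMost) (auto simp: unm_def)
  have "(\<Prod>j=Suc 2..K. z (K + 1 - j) ^ unm m i j) = (\<Prod>j=Suc 2..Suc K'. z (K + 1 - j) ^ unm m i j)"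
    using K' by simp
  also have "\<dots> = (\<Prod>j=2..K'. z (K + 1 - Suc j) ^ unm m i (Suc j))"
    by (rule prod.shift_bounds_cl_Suc_ivl)
  also have "\<dots> = wz (K-1) z m"
    unfolding wz_def using K' by (intro prod.cong) (auto simp: unm_def)
  finally have b: "(\<Prod>j=Suc 2..K. z (K + 1 - j) ^ unm m i j) = wz (K-1) z m" .
  have "z (K-1) ^ i * z (K-1) ^ (m 1 - i) = z (K-1) ^ m 1"
    using i by (simp add: power_add[symmetric])
  then show ?thesis unfolding a b by (simp add: mult.assoc[symmetric])
qed

locale qsys2 = qsys +
  assumes K2: "K \<ge> 2"
begin

lemma merged: "qsys (K-1) (mr r) (Pm P)"
proof
  show "1 \<le> K - 1" using K2 by simp
  show "\<forall>k\<in>{1..K-1}. 0 < mr r k" by (rule mr_pos[OF K2 rpos])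
  show "sigma (mr r) (K-1) < 1" using sigma_mr[OF K2, of r] rlt1 by simp
  note MF = merge_fiber[OF K2 Psum]
  have PmE: "Pm P = (\<lambda>m. \<Sum>i\<le>m 1. P (unm m i))" by (rule ext) (simp add: Pm_def)
  show "is_normalized_solution (K-1) (mr r) (Pm P)"
    unfolding is_normalized_solution_def
  proof (intro conjI ballI)
    fix m assume m: "m \<in> states (K-1)"
    show "0 \<le> Pm P m" unfolding Pm_def
      using unm_states[OF K2 m] by (intro sum_nonneg Pnn)
    show "balance_eq (K-1) (mr r) (Pm P) m"
      using unm_states[OF K2 m] by (intro Pm_balance[OF K2] allI impI bal)
  next
    show "Pm P summable_on states (K-1)" unfolding PmE by (rule MF(1))
    show "infsum (Pm P) (states (K-1)) = 1" unfolding PmE using MF(2) Pone by simp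
  qed
qed

lemma Fz_merge:
  assumes z: "zok K z"
  shows "Fz K P (z (K-1)) z = Fz (K-1) (Pm P) (z (K-1)) z"
proof -
  let ?y = "z (K-1)"
  have y: "0 \<le> ?y" "?y \<le> 1" using z K2 by (auto simp: zok_def)
  let ?f = "\<lambda>n. P n * (?y ^ n 1 * wz K z n)"
  have ub: "0 \<le> ?y ^ n 1 * wz K z n \<and> ?y ^ n 1 * wz K z n \<le> 1" for n
    using wz_bounds[OF z, of n] y by (auto simp: mult_le_one power_le_one)
  have fs: "?f summable_on states K" using sumP[of "states K" "\<lambda>n. ?y ^ n 1 * wz K z n"] ub by blast
  note MF = merge_fiber[OF K2 fs]
  have c: "(\<Sum>i\<le>m 1. ?f (unm m i)) = Pm P m * (?y ^ m 1 * wz (K-1) z m)" for m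
  proof -
    have "(\<Sum>i\<le>m 1. ?f (unm m i)) = (\<Sum>i\<le>m 1. P (unm m i) * (?y ^ m 1 * wz (K-1) z m))"
    proof (rule sum.cong[OF refl])
      fix i assume i: "i \<in> {..m 1}"
      have "?y ^ i * wz K z (unm m i) = ?y ^ m 1 * wz (K-1) z m"
        using i by (intro wz_unm[OF K2]) simp
      then show "?f (unm m i) = P (unm m i) * (?y ^ m 1 * wz (K-1) z m)"
        by (simp only: unm_1)
    qed
    then show ?thesis by (simp add: Pm_def sum_distrib_right)
  qed
  show ?thesis unfolding Fz_def MF(2) c ..
qed

end


definition G0 :: "nat \<Rightarrow> (nat \<Rightarrow> real) \<Rightarrow> (nat \<Rightarrow> real) \<Rightarrow> real" where
  "G0 K r z = (1 - sigma r K) *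
     (\<Prod>\<kappa>=1..K-1. (1 - z \<kappa> * zeta_minus K r \<kappa> z) / (1 - z \<kappa> * zeta_minus K r (\<kappa> - 1) z))"

lemma den_pos:
  assumes rpos: "\<forall>k\<in>{1..K}. r k > 0" and rlt1: "sigma r K < 1" and kK: "\<kappa> < K"
    and z: "zok K z" and x: "0 \<le> x" "x \<le> 1"
  shows "1 - x * zeta_minus K r \<kappa> z > 0"
proof -
  have zc: "\<forall>k\<in>{1..\<kappa>}. 0 \<le> z k \<and> z k \<le> 1" using z kK by (auto simp: zok_def)
  note ZP = zeta_props[OF rpos rlt1 kK zc]
  have "x * zeta_minus K r \<kappa> z \<le> zeta_minus K r \<kappa> z"
    using x ZP(1) by (simp add: mult_left_le_one_le)
  then show ?thesis using ZP(2) by linarith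
qed

lemma zeta_one:
  assumes s0: "0 < sigma r 1" and s1: "sigma r 1 < 1"
  shows "zeta_minus 1 r 0 z = sigma r 1"
proof -
  let ?s = "sigma r 1"
  have "(1 + ?s)^2 - 4 * ?s = (1 - ?s)^2" by (simp add: power2_eq_square algebra_simps)
  then have "sqrt ((1 + ?s)^2 - 4 * ?s) = 1 - ?s" using s1 by simp
  then show ?thesis by (simp add: zeta_minus_def beta_def)
qed

lemma wz_one: "wz 1 z n = 1" by (simp add: wz_def)
lemma wz_one': "wz (Suc 0) z n = 1" by (simp add: wz_def)

lemma core: "qsys K r P \<Longrightarrow> zok K z \<Longrightarrow> genfun K P 0 z = G0 K r z"
proof (induction K arbitrary: r P)
  case 0
  then show ?case by (simp add: qsys_def)
next
  case (Suc K')
  note qs = Suc.prems(1) and z = Suc.prems(2)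
  interpret qsys "Suc K'" r P by (rule qs)
  show ?case
  proof (cases "K' = 0")
    case True
    have s0: "0 < sigma r 1" using sigma_pos[OF rpos, of 1] True by simp
    have s1: "sigma r 1 < 1" using rlt1 True by simp
    have ze: "zeta_minus 1 r 0 z = sigma r 1" by (rule zeta_one[OF s0 s1])
    have "Fz (Suc K') P 1 z = genfun (Suc K') P 0 z / (1 - 1 * zeta_minus (Suc K') r (Suc K' - 1) z)"
      by (rule Fz_formula[OF z]) auto
    moreover have "Fz (Suc K') P 1 z = 1" using Pone True by (simp add: Fz_def wz_one')
    ultimately have "1 = genfun 1 P 0 z / (1 - sigma r 1)" using True ze by simp
    then have "genfun 1 P 0 z = 1 - sigma r 1" using s1 by (simp add: field_simps)
    then show ?thesis using True by (simp add: G0_def)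
  next
    case False
    interpret qsys2 "Suc K'" r P by unfold_locales (use False in simp)
    have K2: "Suc K' \<ge> 2" using False by simp
    have mq: "qsys K' (mr r) (Pm P)" using merged by simp
    have z': "zok K' z" using z by (auto simp: zok_def)
    have IH: "genfun K' (Pm P) 0 z = G0 K' (mr r) z" by (rule Suc.IH[OF mq z'])
    let ?y = "z K'"
    have y: "0 \<le> ?y" "?y \<le> 1" using z False by (auto simp: zok_def)
    let ?z1 = "zeta_minus (Suc K') r K' z"
    let ?z2 = "zeta_minus (Suc K') r (K' - 1) z"
    have z2eq: "zeta_minus K' (mr r) (K' - 1) z = ?z2"
      using zeta_mr[OF K2, of "K' - 1" r z] by simp
    have d1: "1 - ?y * ?z1 > 0" by (rule den_pos[OF rpos rlt1 _ z y]) simp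
    have d2: "1 - ?y * ?z2 > 0" by (rule den_pos[OF rpos rlt1 _ z y]) simp
    have F1: "Fz (Suc K') P ?y z = genfun (Suc K') P 0 z / (1 - ?y * ?z1)"
      using Fz_formula[OF z y] by simp
    have F2: "Fz (Suc K') P ?y z = Fz K' (Pm P) ?y z"
      using Fz_merge[OF z] by simp
    have F3: "Fz K' (Pm P) ?y z = genfun K' (Pm P) 0 z / (1 - ?y * ?z2)"
      using qsys.Fz_formula[OF mq z' y] z2eq by simp
    have g0: "genfun (Suc K') P 0 z = (1 - ?y * ?z1) / (1 - ?y * ?z2) * G0 K' (mr r) z"
      using F1 F2 F3 IH d1 d2 by (simp add: field_simps)
    define fac where "fac \<kappa> = (1 - z \<kappa> * zeta_minus (Suc K') r \<kappa> z) / (1 - z \<kappa> * zeta_minus (Suc K') r (\<kappa> - 1) z)" for \<kappa>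
    have G0': "G0 K' (mr r) z = (1 - sigma r (Suc K')) * (\<Prod>\<kappa>=1..K'-1. fac \<kappa>)"
    proof -
      have "sigma (mr r) K' = sigma r (Suc K')" using sigma_mr[OF K2, of r] by simp
      moreover have "(\<Prod>\<kappa>=1..K'-1. (1 - z \<kappa> * zeta_minus K' (mr r) \<kappa> z) / (1 - z \<kappa> * zeta_minus K' (mr r) (\<kappa> - 1) z))
          = (\<Prod>\<kappa>=1..K'-1. fac \<kappa>)"
      proof (rule prod.cong[OF refl])
        fix \<kappa> assume k: "\<kappa> \<in> {1..K'-1}"
        have a: "zeta_minus K' (mr r) \<kappa> z = zeta_minus (Suc K') r \<kappa> z"
          using zeta_mr[OF K2, of \<kappa> r z] k by simp
        have b: "zeta_minus K' (mr r) (\<kappa> - 1) z = zeta_minus (Suc K') r (\<kappa> - 1) z"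
        proof -
          have "\<kappa> - 1 \<le> Suc K' - 2" using k by auto
          from zeta_mr[OF K2 this, of r z] show ?thesis by simp
        qed
        show "(1 - z \<kappa> * zeta_minus K' (mr r) \<kappa> z) / (1 - z \<kappa> * zeta_minus K' (mr r) (\<kappa> - 1) z) = fac \<kappa>"
          unfolding a b fac_def ..
      qed
      ultimately show ?thesis by (simp add: G0_def)
    qed
    have P: "(\<Prod>\<kappa>=1..K'. fac \<kappa>) = fac K' * (\<Prod>\<kappa>=1..K'-1. fac \<kappa>)"
    proof -
      have "K' = Suc (K' - 1)" using False by simp
      then have "(\<Prod>\<kappa>=1..K'. fac \<kappa>) = (\<Prod>\<kappa>=1..Suc (K'-1). fac \<kappa>)" by simp
      also have "\<dots> = fac (Suc (K'-1)) * (\<Prod>\<kappa>=1..K'-1. fac \<kappa>)" by (rule prod.nat_ivl_Suc') simp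
      finally show ?thesis using \<open>K' = Suc (K' - 1)\<close> by simp
    qed
    have "G0 (Suc K') r z = (1 - sigma r (Suc K')) * (\<Prod>\<kappa>=1..K'. fac \<kappa>)"
      by (simp add: G0_def fac_def)
    also have "\<dots> = fac K' * G0 K' (mr r) z" unfolding P G0' by simp
    also have "fac K' = (1 - ?y * ?z1) / (1 - ?y * ?z2)" by (simp add: fac_def)
    finally show ?thesis using g0 by simp
  qed
qed


lemma genfun_zero:
  assumes K1: "K \<ge> 1"
  shows "genfun K p 0 (\<lambda>_. 0) = p (\<lambda>_. 0)"
proof -
  have z0: "(\<lambda>_. 0) \<in> slice K 0" by (simp add: slice_def states_def)
  have "infsum (\<lambda>n. p n * wz K (\<lambda>_. 0) n) (slice K 0) = infsum p {\<lambda>_. 0}"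
  proof (rule infsum_cong_neutral)
    fix n assume "n \<in> {\<lambda>_. 0} - slice K 0" then show "p n = 0" using z0 by simp
  next
    fix n assume n: "n \<in> slice K 0 - {\<lambda>_. 0}"
    then have nS: "n \<in> states K" "n 1 = 0" "n \<noteq> (\<lambda>_. 0)" by (auto simp: slice_def)
    then obtain k where k: "n k \<noteq> 0" by auto
    then have "k \<in> {1..K}" using nS(1) by (auto simp: states_def)
    then have "k \<in> {2..K}" using nS(2) k by (cases "k = 1") auto
    then have "wz K (\<lambda>_. 0) n = 0" unfolding wz_def using k
      by (intro prod_zero) auto
    then show "p n * wz K (\<lambda>_. 0) n = 0" by simp
  next
    fix n assume "n \<in> slice K 0 \<inter> {\<lambda>_. 0}"
    then have "n = (\<lambda>_. 0)" by simp
    then show "p n * wz K (\<lambda>_. 0) n = p n" by (simp add: wz_def)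
  qed
  then show ?thesis by (simp add: genfun_wz)
qed

theorem mainTheorem1:
  fixes K :: nat and r :: "nat \<Rightarrow> real" and P :: "(nat \<Rightarrow> nat) \<Rightarrow> real"
  assumes K2: "K \<ge> 2"
    and rpos: "\<forall>k\<in>{1..K}. r k > 0"
    and rlt1: "sigma r K < 1"
    and Psol: "is_normalized_solution K r P"
  shows "(\<forall>l::nat. \<forall>z::nat \<Rightarrow> real. (\<forall>k\<in>{1..K-1}. 0 \<le> z k \<and> z k \<le> 1) \<longrightarrow>
            (\<forall>\<kappa>\<in>{1..K-1}. 1 - z \<kappa> * zeta_minus K r (\<kappa> - 1) z > 0) \<and>
            genfun K P l z =
              (1 - sigma r K) * zeta_minus K r (K - 1) z ^ l *
              (\<Prod>\<kappa>=1..K-1. (1 - z \<kappa> * zeta_minus K r \<kappa> z) / (1 - z \<kappa> * zeta_minus K r (\<kappa> - 1) z)) \<and>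
            genfun K P l z = genfun K P 0 z * zeta_minus K r (K - 1) z ^ l)
       \<and> P (\<lambda>_. 0) = 1 - sigma r K
       \<and> genfun K P 0 (\<lambda>_. 0) = 1 - sigma r K"
proof -
  have qs: "qsys K r P" by unfold_locales (use K2 rpos rlt1 Psol in auto)
  interpret qsys K r P by (rule qs)
  have A: "(\<forall>\<kappa>\<in>{1..K-1}. 1 - z \<kappa> * zeta_minus K r (\<kappa> - 1) z > 0) \<and>
            genfun K P l z =
              (1 - sigma r K) * zeta_minus K r (K - 1) z ^ l *
              (\<Prod>\<kappa>=1..K-1. (1 - z \<kappa> * zeta_minus K r \<kappa> z) / (1 - z \<kappa> * zeta_minus K r (\<kappa> - 1) z)) \<and>
            genfun K P l z = genfun K P 0 z * zeta_minus K r (K - 1) z ^ l"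
    if zc: "\<forall>k\<in>{1..K-1}. 0 \<le> z k \<and> z k \<le> 1" for l z
  proof (intro conjI ballI)
    have z: "zok K z" using zc by (simp add: zok_def)
    fix \<kappa> assume k: "\<kappa> \<in> {1..K-1}"
    have x: "0 \<le> z \<kappa>" "z \<kappa> \<le> 1" using zc k by auto
    show "1 - z \<kappa> * zeta_minus K r (\<kappa> - 1) z > 0"
      by (rule den_pos[OF rpos rlt1 _ z x]) (use k in auto)
  next
    have z: "zok K z" using zc by (simp add: zok_def)
    show G: "genfun K P l z = genfun K P 0 z * zeta_minus K r (K - 1) z ^ l"
      by (rule slice_geo[OF z])
    show "genfun K P l z =
              (1 - sigma r K) * zeta_minus K r (K - 1) z ^ l *
              (\<Prod>\<kappa>=1..K-1. (1 - z \<kappa> * zeta_minus K r \<kappa> z) / (1 - z \<kappa> * zeta_minus K r (\<kappa> - 1) z))"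
      unfolding G core[OF qs z] G0_def by (simp add: mult_ac)
  qed
  have z0: "zok K (\<lambda>_. 0)" by (simp add: zok_def)
  have G00: "genfun K P 0 (\<lambda>_. 0) = 1 - sigma r K"
    unfolding core[OF qs z0] G0_def by simp
  have P0: "P (\<lambda>_. 0) = 1 - sigma r K"
    using G00 genfun_zero[of K P] K2 by simp
  show ?thesis using A P0 G00 by blast
qed


end
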